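(* Let $m\ge2$, let $D=\mathrm{diag}(d_1,\dots,d_m)$ with $d_1<d_2<\dots<d_m$, let $\beta_1,\beta_2$ be nonzero reals and $\mathbf v_1,\mathbf v_2\in\mathbb R^m$, and suppose $\{1,\dots,m\}$ is partitioned into sets $J_1,J_2,J_3$ such that $\mathbf v_1$ vanishes on $J_3$ and $\mathbf v_2$ vanishes on $J_1$. Let $M=D+\beta_1\mathbf v_1\mathbf v_1^T+\beta_2\mathbf v_2\mathbf v_2^T$ and assume no $d_i$ is an eigenvalue of $M$. Then for every $j\in\{1,\dots,m-1\}$ and $k\in\{1,\dots,m-j\}$, the number of eigenvalues of $M$ (counted with multiplicity) in $I_{j,j+k}$ is at least $k-1$ and at most $k+1$. In particular each interval $(d_j,d_{j+1})$ contains at most two eigenvalues of $M$.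
   Context: $I_{j,j+k}:=\bigcup_{i=j}^{j+k-1}(d_i,d_{i+1})=(d_j,d_{j+k})\setminus\{d_{j+1},\dots,d_{j+k-1}\}$. *)

theory Defs
  imports "Jordan_Normal_Form.Char_Poly"
begin

text \<open>Indices are 1-based as in the paper: d, v1, v2 are used on {1..m};
 matrix entry (i,j) (0-based, i,j < m) corresponds to paper indices (i+1, j+1).\<close>

definition rank2_mat :: "nat \<Rightarrow> (nat \<Rightarrow> real) \<Rightarrow> real \<Rightarrow> real \<Rightarrow> (nat \<Rightarrow> real) \<Rightarrow> (nat \<Rightarrow> real) \<Rightarrow> real mat" where
  "rank2_mat m d \<beta>1 \<beta>2 v1 v2 = mat m m (\<lambda>(i, j).
      (if i = j then d (i + 1) else 0)
      + \<beta>1 * v1 (i + 1) * v1 (j + 1) + \<beta>2 * v2 (i + 1) * v2 (j + 1))"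

definition I_int :: "(nat \<Rightarrow> real) \<Rightarrow> nat \<Rightarrow> nat \<Rightarrow> real set" where
  "I_int d j l = (\<Union>i\<in>{j..<l}. {d i<..<d (Suc i)})"

definition eig_count :: "real mat \<Rightarrow> real set \<Rightarrow> nat" where
  "eig_count A S = (\<Sum>x\<in>{x. eigenvalue A x \<and> x \<in> S}. order x (char_poly A))"

end

theory Submission
  imports Defs "Jordan_Normal_Form.Schur_Decomposition"
begin


lemma orthonormal_completion:
  fixes v :: "real vec"
  assumes v: "v \<in> carrier_vec n" and v0: "v \<noteq> 0\<^sub>v n"
  shows "\<exists>U \<in> carrier_mat n n. transpose_mat U * U = 1\<^sub>m n \<and> col U 0 = (1 / sqrt (v \<bullet> v)) \<cdot>\<^sub>v v"
proof -
  interpret cof_vec_space n "TYPE(real)" .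
  define b where "b = basis_completion v"
  define ws where "ws = gram_schmidt n b"
  from basis_completion[OF v v0, folded b_def]
  have dist_b: "distinct b" 
    and indep: "\<not> lin_dep (set b)" and b: "set b \<subseteq> carrier_vec n" and hdb: "hd b = v" 
    and len_b: "length b = n" by auto
  have n: "n > 0" using v v0 by (metis neq0_conv vec_of_dim_0 carrier_vecD zero_carrier_vec)
  from hdb len_b n obtain vs where bv: "b = v # vs" by (cases b, auto)
  from gram_schmidt_result[OF b dist_b indep refl, folded ws_def]
  have ws: "set ws \<subseteq> carrier_vec n" "corthogonal ws" "length ws = n" 
    by (auto simp: len_b)
  from gram_schmidt_hd[OF v, of vs, folded bv] have hdws: "hd ws = v" unfolding ws_def .
  define us where "us = map (\<lambda>w. (1 / sqrt (w \<bullet> w)) \<cdot>\<^sub>v w) ws"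
  define U where "U = mat_of_cols n us"
  have lus: "length us = n" using ws by (simp add: us_def)
  have U: "U \<in> carrier_mat n n" unfolding U_def using lus by auto
  have wsi: "\<And>i. i < n \<Longrightarrow> ws ! i \<in> carrier_vec n" using ws by auto
  have orth: "\<And>i j. i < n \<Longrightarrow> j < n \<Longrightarrow> (ws ! i \<bullet> ws ! j = 0) = (i \<noteq> j)"
    using ws(2,3) unfolding corthogonal_def by auto
  have pos: "\<And>i. i < n \<Longrightarrow> ws ! i \<bullet> ws ! i > 0"
  proof -
    fix i assume i: "i < n"
    have "ws ! i \<bullet> ws ! i \<ge> 0"
      using wsi[OF i] by (simp add: scalar_prod_def sum_nonneg)
    with orth[OF i i] show "ws ! i \<bullet> ws ! i > 0" by auto
  qed
  have colU: "\<And>i. i < n \<Longrightarrow> col U i = us ! i" unfolding U_def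
    using lus by (intro col_mat_of_cols) (auto simp: us_def wsi)
  show ?thesis
  proof (intro bexI[OF _ U] conjI)
    show "transpose_mat U * U = 1\<^sub>m n"
    proof (rule eq_matI)
      fix i j assume i: "i < dim_row (1\<^sub>m n)" and j: "j < dim_col (1\<^sub>m n)"
      hence i: "i < n" and j: "j < n" by auto
      have "(transpose_mat U * U) $$ (i,j) = us ! i \<bullet> us ! j"
        using U i j colU by (simp add: row_transpose)
      also have "\<dots> = (1 / sqrt (ws!i \<bullet> ws!i)) * (1 / sqrt (ws!j \<bullet> ws!j)) * (ws ! i \<bullet> ws ! j)"
        using i j ws(3) wsi[OF i] wsi[OF j] unfolding us_def by (simp add: mult.assoc)
      also have "\<dots> = 1\<^sub>m n $$ (i,j)"
      proof (cases "i = j")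
        case True
        have "sqrt (ws!i \<bullet> ws!i) * sqrt (ws!i \<bullet> ws!i) = ws!i \<bullet> ws!i"
          using pos[OF i] by (simp add: real_sqrt_mult_self)
        then show ?thesis using True i pos[OF i] by (simp add: field_simps)
      next
        case False then show ?thesis using orth[OF i j] i j by simp
      qed
      finally show "(transpose_mat U * U) $$ (i,j) = 1\<^sub>m n $$ (i,j)" .
    qed (use U in auto)
    show "col U 0 = (1 / sqrt (v \<bullet> v)) \<cdot>\<^sub>v v"
      using colU[OF n] hdws ws(3) n unfolding us_def by (cases ws, auto)
  qed
qed



lemma orth_diag:
  fixes A :: "real mat"
  assumes "A \<in> carrier_mat n n" "transpose_mat A = A" "char_poly A = (\<Prod> e \<leftarrow> es. [:-e,1:])"
  shows "\<exists>Q \<in> carrier_mat n n. transpose_mat Q * Q = 1\<^sub>m n \<and> diagonal_mat (transpose_mat Q * A * Q)"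
  using assms
proof (induct es arbitrary: n A)
  case Nil
  with degree_monic_char_poly[of A n] have n: "n = 0" by auto
  show ?case using n Nil(1) by (intro bexI[of _ "1\<^sub>m 0"]) (auto simp: diagonal_mat_def)
next
  case (Cons e es n A)
  from Cons have A: "A \<in> carrier_mat n n" and sym: "transpose_mat A = A" by auto
  let ?n1 = "n - 1"
  have cp: "char_poly A = [: -e, 1 :] * (\<Prod>e \<leftarrow> es. [:- e, 1:])" using Cons(4) by auto
  have mon: "monic (\<Prod>e\<leftarrow> es. [:- e, 1:])" by (rule monic_prod_list, auto)
  have deg: "degree (char_poly A) = Suc (degree (\<Prod>e\<leftarrow> es. [:- e, 1:]))" unfolding cp
    by (subst degree_mult_eq, insert mon, auto)
  with degree_monic_char_poly[OF A] have n: "n \<noteq> 0" by auto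
  have e: "eigenvalue A e" 
    unfolding eigenvalue_root_char_poly[OF A] cp by simp
  define v where "v = find_eigenvector A e"
  from find_eigenvector[OF A e] have ev: "eigenvector A v e" unfolding v_def .
  from this[unfolded eigenvector_def]
  have v: "v \<in> carrier_vec n" and v0: "v \<noteq> 0\<^sub>v n" and Av: "A *\<^sub>v v = e \<cdot>\<^sub>v v" using A by auto
  from orthonormal_completion[OF v v0] obtain U where U: "U \<in> carrier_mat n n"
    and UU: "transpose_mat U * U = 1\<^sub>m n" and U0: "col U 0 = (1 / sqrt (v \<bullet> v)) \<cdot>\<^sub>v v" by auto
  have UT: "transpose_mat U \<in> carrier_mat n n" using U by auto
  have UU2: "U * transpose_mat U = 1\<^sub>m n"
    using mat_mult_left_right_inverse[OF UT U UU] .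
  define A' where "A' = transpose_mat U * A * U"
  have A': "A' \<in> carrier_mat n n" unfolding A'_def using U A by auto
  have symA': "transpose_mat A' = A'" unfolding A'_def using U A sym
    by (simp add: transpose_mult[of _ n n _ n] assoc_mult_mat[of _ n n _ n _ n])
  have AU0: "A *\<^sub>v col U 0 = e \<cdot>\<^sub>v col U 0" unfolding U0 using A v Av
    by (simp add: mult_mat_vec smult_smult_assoc mult.commute)
  have A'col0: "\<And>i. i < n \<Longrightarrow> A' $$ (i,0) = (if i = 0 then e else 0)"
  proof -
    fix i assume i: "i < n"
    have "A' $$ (i,0) = col U i \<bullet> (A *\<^sub>v col U 0)"
      unfolding A'_def using U A i n
      by (simp add: assoc_mult_mat[of _ n n _ n _ n] col_mult2[of _ n n _ n] row_transpose mult_mat_vec_def)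
    also have "\<dots> = e * (col U i \<bullet> col U 0)" unfolding AU0 using U i by simp
    also have "col U i \<bullet> col U 0 = (transpose_mat U * U) $$ (i,0)" using U i n by (simp add: row_transpose)
    finally show "A' $$ (i,0) = (if i = 0 then e else 0)" unfolding UU using i n by simp
  qed
  obtain A1 A2 A0 A3 where splitA': "split_block A' 1 1 = (A1,A2,A0,A3)"
    by (cases "split_block A' 1 1", auto)
  from A' n have "dim_row A' = 1 + ?n1" "dim_col A' = 1 + ?n1" by auto
  from split_block[OF splitA' this] have A1: "A1 \<in> carrier_mat 1 1" and A2: "A2 \<in> carrier_mat 1 ?n1"
    and A0: "A0 \<in> carrier_mat ?n1 1" and A3: "A3 \<in> carrier_mat ?n1 ?n1" 
    and A'block: "A' = four_block_mat A1 A2 A0 A3" by auto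
  have entries: "\<And>i j. i < ?n1 \<Longrightarrow> j < ?n1 \<Longrightarrow> A3 $$ (i,j) = A' $$ (Suc i, Suc j)"
    "\<And>i. i < ?n1 \<Longrightarrow> A0 $$ (i,0) = A' $$ (Suc i, 0)"
    "\<And>j. j < ?n1 \<Longrightarrow> A2 $$ (0,j) = A' $$ (0, Suc j)"
    "A1 $$ (0,0) = A' $$ (0,0)"
    using splitA' A' n unfolding split_block_def Let_def by auto
  have A0id: "A0 = 0\<^sub>m ?n1 1"
    by (rule eq_matI, insert A0 entries A'col0 n, auto)
  have A2id: "A2 = 0\<^sub>m 1 ?n1"
  proof (rule eq_matI)
    fix i j assume "i < dim_row (0\<^sub>m 1 ?n1)" "j < dim_col (0\<^sub>m 1 ?n1)"
    hence i: "i = 0" and j: "j < ?n1" by auto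
    have "A' $$ (0, Suc j) = transpose_mat A' $$ (0, Suc j)" using symA' by simp
    also have "\<dots> = A' $$ (Suc j, 0)" using A' j n by simp
    finally show "A2 $$ (i,j) = 0\<^sub>m 1 ?n1 $$ (i,j)" using entries(3)[OF j] A'col0[of "Suc j"] i j n by simp
  qed (use A2 in auto)
  have A1id: "A1 = mat 1 1 (\<lambda> _. e)"
    by (rule eq_matI, insert A1 entries(4) A'col0[of 0] n, auto)
  have symA3: "transpose_mat A3 = A3"
  proof (rule eq_matI)
    fix i j assume "i < dim_row A3" "j < dim_col A3"
    hence i: "i < ?n1" and j: "j < ?n1" using A3 by auto
    have "A' $$ (Suc j, Suc i) = transpose_mat A' $$ (Suc i, Suc j)" using A' i j n by simp
    then show "transpose_mat A3 $$ (i,j) = A3 $$ (i,j)" using entries(1)[OF i j] entries(1)[OF j i] i j A3 symA'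
      by simp
  qed (use A3 in auto)
  have A'A_wit: "similar_mat_wit A' A (transpose_mat U) U"
    by (rule similar_mat_witI[of _ _ n], insert U UT A A' UU UU2, auto simp: A'_def)
  hence A'A: "similar_mat A' A" unfolding similar_mat_def by blast
  from cp char_poly_similar[OF A'A]
  have cp: "char_poly A' = [: -e,1 :] * (\<Prod> e \<leftarrow> es. [:- e, 1:])" by simp
  also have "char_poly A' = char_poly A1 * char_poly A3" 
    unfolding A'block A0id
    by (rule char_poly_four_block_zeros_col[OF A1 A2 A3])
  also have "char_poly A1 = [: -e,1 :]"
    by (simp add: A1id char_poly_defs det_def sign_def)
  finally have cp3: "char_poly A3 = (\<Prod> e \<leftarrow> es. [:- e, 1:])"
    by (metis mult_cancel_left pCons_eq_0_iff zero_neq_one)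
  from Cons(1)[OF A3 symA3 cp3] obtain Q3 where Q3: "Q3 \<in> carrier_mat ?n1 ?n1"
    and QQ3: "transpose_mat Q3 * Q3 = 1\<^sub>m ?n1" and diag3: "diagonal_mat (transpose_mat Q3 * A3 * Q3)"
    by auto
  define P where "P = four_block_mat (1\<^sub>m 1) (0\<^sub>m 1 ?n1) (0\<^sub>m ?n1 1) Q3"
  have P: "P \<in> carrier_mat n n" unfolding P_def using Q3 n by auto
  have PT: "transpose_mat P = four_block_mat (1\<^sub>m 1) (0\<^sub>m 1 ?n1) (0\<^sub>m ?n1 1) (transpose_mat Q3)"
    unfolding P_def using Q3 by (subst transpose_four_block_mat, auto)
  have PP: "transpose_mat P * P = 1\<^sub>m n"
    unfolding PT unfolding P_def using Q3 QQ3 n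
    by (subst mult_four_block_mat[of _ 1 1 _ ?n1 _ ?n1 _ _ 1 _ ?n1], auto)
  have PA'P: "transpose_mat P * A' * P = four_block_mat A1 (0\<^sub>m 1 ?n1) (0\<^sub>m ?n1 1) (transpose_mat Q3 * A3 * Q3)"
  proof -
    have "transpose_mat P * A' = four_block_mat A1 (0\<^sub>m 1 ?n1) (0\<^sub>m ?n1 1) (transpose_mat Q3 * A3)"
      unfolding PT A'block A0id A2id using Q3 A1 A3
      by (subst mult_four_block_mat[of _ 1 1 _ ?n1 _ ?n1 _ _ 1 _ ?n1], auto)
    then show ?thesis unfolding P_def using Q3 A1 A3
      by (simp, subst mult_four_block_mat[of _ 1 1 _ ?n1 _ ?n1 _ _ 1 _ ?n1], auto)
  qed
  define Q where "Q = U * P"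
  have Q: "Q \<in> carrier_mat n n" unfolding Q_def using U P by auto
  have QTQ: "transpose_mat Q = transpose_mat P * transpose_mat U" unfolding Q_def
    using U P by (simp add: transpose_mult)
  have "transpose_mat Q * Q = transpose_mat P * (transpose_mat U * U) * P"
    unfolding QTQ using U P
    by (simp add: Q_def assoc_mult_mat[of _ n n _ n _ n])
  also have "\<dots> = 1\<^sub>m n" unfolding UU using P PP by simp
  finally have QQ: "transpose_mat Q * Q = 1\<^sub>m n" .
  have "transpose_mat Q * A * Q = transpose_mat P * A' * P"
    unfolding QTQ unfolding Q_def A'_def using U P A
    by (simp add: assoc_mult_mat[of _ n n _ n _ n])
  also note PA'P
  finally have QAQ: "transpose_mat Q * A * Q = four_block_mat A1 (0\<^sub>m 1 ?n1) (0\<^sub>m ?n1 1) (transpose_mat Q3 * A3 * Q3)" .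
  have diag: "diagonal_mat (transpose_mat Q * A * Q)"
    unfolding QAQ diagonal_mat_def using A1 Q3 A3 diag3 unfolding diagonal_mat_def by auto
  show ?case using Q QQ diag by blast
qed



lemma sym_real_rooted:
  fixes A :: "real mat"
  assumes A: "A \<in> carrier_mat n n" and sym: "transpose_mat A = A"
  shows "\<exists>es. char_poly A = (\<Prod> e \<leftarrow> es. [:-e,1:])"
proof -
  interpret R: map_poly_inj_idom_hom "of_real :: real \<Rightarrow> complex" ..
  define C where "C = map_mat (of_real :: real \<Rightarrow> complex) A"
  have C: "C \<in> carrier_mat n n" using A by (simp add: C_def)
  have cpC: "char_poly C = map_poly of_real (char_poly A)"
    unfolding C_def by (rule of_real_hom.char_poly_hom[OF A])
  from char_poly_factorized[OF C] obtain as where as: "char_poly C = (\<Prod> a \<leftarrow> as. [:- a, 1:])" by auto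
  have real: "a \<in> \<real>" if a: "a \<in> set as" for a
  proof -
    have "poly (char_poly C) a = 0" unfolding as using a
      by (induct as, auto)
    hence "eigenvalue C a" using eigenvalue_root_char_poly[OF C] by simp
    then obtain w where w: "w \<in> carrier_vec n" "w \<noteq> 0\<^sub>v n" "C *\<^sub>v w = a \<cdot>\<^sub>v w"
      unfolding eigenvalue_def eigenvector_def using C by auto
    define s where "s = (\<Sum>i<n. cnj (w $ i) * (C *\<^sub>v w) $ i)"
    define N where "N = (\<Sum>i<n. cnj (w $ i) * w $ i)"
    have sN: "s = a * N" unfolding s_def N_def w(3) using w(1)
      by (simp add: sum_distrib_left mult.commute mult.left_commute)
    have s2: "s = (\<Sum>i<n. \<Sum>j<n. of_real (A $$ (i,j)) * cnj (w $ i) * w $ j)"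
      unfolding s_def using w(1) C A
      by (simp add: C_def scalar_prod_def sum_distrib_left mult.commute mult.left_commute lessThan_atLeast0)
    have "cnj s = (\<Sum>i<n. \<Sum>j<n. of_real (A $$ (i,j)) * w $ i * cnj (w $ j))"
      unfolding s2 by (simp add: cnj_sum)
    also have "\<dots> = (\<Sum>j<n. \<Sum>i<n. of_real (A $$ (i,j)) * w $ i * cnj (w $ j))"
      by (rule sum.swap)
    also have "\<dots> = s" unfolding s2
    proof (intro sum.cong refl)
      fix i j assume i: "i \<in> {..<n}" and j: "j \<in> {..<n}"
      have "A $$ (j,i) = transpose_mat A $$ (i,j)" using A i j by simp
      then show "of_real (A $$ (j,i)) * w $ j * cnj (w $ i) = of_real (A $$ (i,j)) * cnj (w $ i) * w $ j"
        using sym by simp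
    qed
    finally have cs: "cnj s = s" .
    have Nr: "N = of_real (\<Sum>i<n. (cmod (w $ i))^2)"
      unfolding N_def of_real_sum by (intro sum.cong refl) (metis complex_norm_square mult.commute)
    have "\<exists>i<n. w $ i \<noteq> 0" using w(1,2) by (metis carrier_vecD eq_vecI index_zero_vec(1,2))
    then obtain i where i: "i < n" "w $ i \<noteq> 0" by auto
    have "(\<Sum>i<n. (cmod (w $ i))^2) \<ge> (cmod (w $ i))^2"
      by (rule member_le_sum, insert i, auto)
    moreover have "(cmod (w $ i))^2 > 0" using i by simp
    ultimately have "(\<Sum>i<n. (cmod (w $ i))^2) \<noteq> 0" by linarith
    then have Npos: "N \<noteq> 0" unfolding Nr of_real_eq_0_iff .
    have "cnj N = N" unfolding Nr by simp
    have a: "a = s / N" using sN Npos by simp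
    have "cnj a = a" unfolding a using cs \<open>cnj N = N\<close> by simp
    then show ?thesis using Reals_cnj_iff by blast
  qed
  define es where "es = map Re as"
  have "(\<Prod> a \<leftarrow> as. [:- a, 1:]) = map_poly of_real (\<Prod> e \<leftarrow> es. [:-e,1:])"
    using real unfolding es_def
  proof (induct as)
    case (Cons a as)
    have "a = of_real (Re a)" using Cons(2) by (simp add: complex_is_Real_iff complex_eq_iff)
    then have h: "[:- a, 1:] = map_poly of_real [:- Re a, 1:]" by (simp add: map_poly_pCons)
    have IH: "(\<Prod> a \<leftarrow> as. [:- a, 1:]) = map_poly of_real (\<Prod> e \<leftarrow> map Re as. [:-e,1:])"
      using Cons by simp
    have "(\<Prod> b \<leftarrow> a # as. [:- b, 1:]) = [:- a, 1:] * (\<Prod> a \<leftarrow> as. [:- a, 1:])" by simp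
    also have "\<dots> = map_poly of_real ([:- Re a, 1:] * (\<Prod> e \<leftarrow> map Re as. [:-e,1:]))"
      unfolding R.hom_mult h[symmetric] IH ..
    finally show ?case by simp
  qed simp
  with cpC as have "map_poly of_real (char_poly A) = map_poly (of_real :: real \<Rightarrow> complex) (\<Prod> e \<leftarrow> es. [:-e,1:])" by simp
  then show ?thesis by (intro exI[of _ es], rule R.injectivity)
qed



lemma prod_list_upt: "prod_list (map f [0..<n]) = (\<Prod>i<n. f i)"
  by (induct n) (auto simp: lessThan_Suc mult.commute)

lemma spectral:
  fixes A :: "real mat"
  assumes A: "A \<in> carrier_mat n n" and sym: "transpose_mat A = A"
  shows "\<exists>lam q. (\<forall>l<n. \<forall>l'<n. (\<Sum>i<n. q l i * q l' i) = (if l = l' then 1 else 0))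
         \<and> (\<forall>i<n. \<forall>j<n. A $$ (i,j) = (\<Sum>l<n. lam l * q l i * q l j))
         \<and> char_poly A = (\<Prod>l<n. [:- lam l, 1:])"
proof -
  from sym_real_rooted[OF A sym] obtain es where es: "char_poly A = (\<Prod> e \<leftarrow> es. [:-e,1:])" by auto
  from orth_diag[OF A sym es] obtain Q where Q: "Q \<in> carrier_mat n n"
    and QQ: "transpose_mat Q * Q = 1\<^sub>m n" and diag: "diagonal_mat (transpose_mat Q * A * Q)" by auto
  define L where "L = transpose_mat Q * A * Q"
  have L: "L \<in> carrier_mat n n" unfolding L_def using Q A by auto
  have QT: "transpose_mat Q \<in> carrier_mat n n" using Q by auto
  have QQ2: "Q * transpose_mat Q = 1\<^sub>m n" using mat_mult_left_right_inverse[OF QT Q QQ] .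
  have AL: "A = Q * L * transpose_mat Q"
  proof -
    have "Q * L * transpose_mat Q = (Q * transpose_mat Q) * A * (Q * transpose_mat Q)"
      unfolding L_def using Q A
      by (simp add: assoc_mult_mat[of _ n n _ n _ n])
    also have "\<dots> = A" unfolding QQ2 using A by simp
    finally show ?thesis by simp
  qed
  define lam where "lam l = L $$ (l,l)" for l
  define q where "q l i = Q $$ (i,l)" for l i
  have Ldiag: "\<And>i j. i < n \<Longrightarrow> j < n \<Longrightarrow> L $$ (i,j) = (if i = j then lam i else 0)"
    using diag L unfolding L_def[symmetric] diagonal_mat_def lam_def by auto
  have orth: "\<forall>l<n. \<forall>l'<n. (\<Sum>i<n. q l i * q l' i) = (if l = l' then 1 else 0)"
  proof (intro allI impI)
    fix l l' assume l: "l < n" and l': "l' < n"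
    have "(transpose_mat Q * Q) $$ (l,l') = (\<Sum>i<n. q l i * q l' i)"
      using Q l l' by (simp add: scalar_prod_def q_def lessThan_atLeast0)
    then show "(\<Sum>i<n. q l i * q l' i) = (if l = l' then 1 else 0)" unfolding QQ using l l' by simp
  qed
  have rep: "\<forall>i<n. \<forall>j<n. A $$ (i,j) = (\<Sum>l<n. lam l * q l i * q l j)"
  proof (intro allI impI)
    fix i j assume i: "i < n" and j: "j < n"
    have QL: "\<And>l. l < n \<Longrightarrow> (Q * L) $$ (i,l) = Q $$ (i,l) * lam l"
    proof -
      fix l assume l: "l < n"
      have "(Q * L) $$ (i,l) = (\<Sum>k<n. Q $$ (i,k) * L $$ (k,l))"
        using Q L i l by (simp add: scalar_prod_def lessThan_atLeast0)
      also have "\<dots> = (\<Sum>k<n. if k = l then Q $$ (i,l) * lam l else 0)"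
        by (rule sum.cong, insert Ldiag l, auto)
      also have "\<dots> = Q $$ (i,l) * lam l" using l by simp
      finally show "(Q * L) $$ (i,l) = Q $$ (i,l) * lam l" .
    qed
    define QL where "QL = Q * L"
    have QLc: "QL \<in> carrier_mat n n" unfolding QL_def using Q L by auto
    have "A $$ (i,j) = (\<Sum>l<n. QL $$ (i,l) * Q $$ (j,l))"
      unfolding AL QL_def[symmetric] using QLc Q i j by (simp add: scalar_prod_def lessThan_atLeast0)
    also have "\<dots> = (\<Sum>l<n. (Q * L) $$ (i,l) * Q $$ (j,l))" unfolding QL_def ..
    also have "\<dots> = (\<Sum>l<n. lam l * q l i * q l j)"
      by (rule sum.cong, insert QL, auto simp: q_def)
    finally show "A $$ (i,j) = (\<Sum>l<n. lam l * q l i * q l j)" .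
  qed
  have "similar_mat_wit A L Q (transpose_mat Q)"
    by (rule similar_mat_witI[of _ _ n], insert Q QT A L QQ QQ2 AL, auto)
  hence "similar_mat A L" unfolding similar_mat_def by blast
  hence "char_poly A = char_poly L" by (rule char_poly_similar)
  also have "\<dots> = (\<Prod> a \<leftarrow> diag_mat L. [:- a, 1:])"
  proof (rule char_poly_upper_triangular[OF L])
    show "upper_triangular L" using Ldiag L unfolding upper_triangular_def by auto
  qed
  also have "diag_mat L = map lam [0..<n]" unfolding diag_mat_def lam_def using L by auto
  also have "(\<Prod> a \<leftarrow> map lam [0..<n]. [:- a, 1:]) = (\<Prod>l<n. [:- lam l, 1:])"
    using prod_list_upt[of "\<lambda>l. [:- lam l, 1:]" n] by (simp add: o_def)
  finally show ?thesis using orth rep by blast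
qed

lemma order_prod_linear:
  fixes lam :: "nat \<Rightarrow> real" and n :: nat
  shows "Polynomial.order x (\<Prod>l<n. [:- lam l, 1:]) = card {l. l < n \<and> lam l = x}"
proof (induct n)
  case (Suc n)
  have nz: "(\<Prod>l<n. [:- lam l, 1:]) \<noteq> (0 :: real poly)"
    by (subst prod_zero_iff, auto)
  have "{l. l < Suc n \<and> lam l = x} = {l. l < n \<and> lam l = x} \<union> (if lam n = x then {n} else {})"
    by (auto simp: less_Suc_eq)
  hence c: "card {l. l < Suc n \<and> lam l = x} = card {l. l < n \<and> lam l = x} + (if lam n = x then 1 else 0)"
    by (auto simp: card_insert_if)
  have "Polynomial.order x (\<Prod>l<Suc n. [:- lam l, 1:]) = Polynomial.order x ((\<Prod>l<n. [:- lam l, 1:]) * [:- lam n, 1:])"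
    by (simp add: lessThan_Suc mult.commute)
  also have "\<dots> = Polynomial.order x (\<Prod>l<n. [:- lam l, 1:]) + Polynomial.order x [:- lam n, 1:]"
    by (rule order_mult, insert nz, metis mult_eq_0_iff pCons_eq_0_iff one_neq_zero)
  finally show ?case unfolding c Suc order_linear' by auto
qed simp

lemma eig_count_spec:
  fixes A :: "real mat"
  assumes A: "A \<in> carrier_mat n n" and cp: "char_poly A = (\<Prod>l<n. [:- lam l, 1:])"
  shows "eig_count A S = card {l. l < n \<and> lam l \<in> S}"
proof -
  define T where "T = {l. l < n \<and> lam l \<in> S}"
  have ev: "eigenvalue A x \<longleftrightarrow> (\<exists>l<n. lam l = x)" for x
    unfolding eigenvalue_root_char_poly[OF A] cp poly_prod
    by (subst prod_zero_iff, auto)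
  have X: "{x. eigenvalue A x \<and> x \<in> S} = lam ` T" unfolding ev T_def by auto
  have "eig_count A S = (\<Sum>x\<in>lam ` T. card {l. l < n \<and> lam l = x})"
    unfolding eig_count_def X cp order_prod_linear ..
  also have "\<dots> = (\<Sum>x\<in>lam ` T. card {l\<in>T. lam l = x})"
    by (rule sum.cong, auto simp: T_def intro!: arg_cong[of _ _ card])
  also have "\<dots> = card (\<Union>x\<in>lam ` T. {l\<in>T. lam l = x})"
    by (rule card_UN_disjoint[symmetric], auto simp: T_def)
  also have "(\<Union>x\<in>lam ` T. {l\<in>T. lam l = x}) = T" by auto
  finally show ?thesis unfolding T_def .
qed



lemma homog_solution:
  fixes a :: "'e \<Rightarrow> 'v \<Rightarrow> real"
  assumes "finite V" "finite E" "card E < card V"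
  shows "\<exists>c. (\<exists>l\<in>V. c l \<noteq> 0) \<and> (\<forall>j\<in>E. (\<Sum>l\<in>V. a j l * c l) = 0)"
  using assms
proof (induct V arbitrary: E a rule: finite_induct)
  case empty then show ?case by simp
next
  case (insert n V E a)
  show ?case
  proof (cases "\<forall>j\<in>E. a j n = 0")
    case True
    define c where "c = (\<lambda>l. if l = n then (1::real) else 0)"
    have z: "(\<Sum>l\<in>V. a j l * c l) = 0" for j
      by (rule sum.neutral) (use insert(2) in \<open>auto simp: c_def\<close>)
    have "\<forall>j\<in>E. (\<Sum>l\<in>insert n V. a j l * c l) = 0"
      using True insert(1,2) z by (simp add: c_def)
    moreover have "\<exists>l\<in>insert n V. c l \<noteq> 0" by (auto simp: c_def)
    ultimately show ?thesis by blast
  next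
    case False
    then obtain j0 where j0: "j0 \<in> E" "a j0 n \<noteq> 0" by auto
    define E' where "E' = E - {j0}"
    have cardE: "card E' < card V"
    proof -
      have "card E' = card E - 1" unfolding E'_def using j0 insert(4) by simp
      moreover have "card E \<ge> 1" using j0 insert(4) by (metis card_0_eq empty_iff less_one not_le)
      moreover have "card E < card V + 1" using insert(1,2,5) by simp
      ultimately show ?thesis by linarith
    qed
    define b where "b = (\<lambda>j l. a j l - a j n / a j0 n * a j0 l)"
    from insert(3)[of E' b] cardE insert(4) obtain c' where c': "\<exists>l\<in>V. c' l \<noteq> 0"
      "\<forall>j\<in>E'. (\<Sum>l\<in>V. b j l * c' l) = 0" unfolding E'_def by auto
    define S0 where "S0 = (\<Sum>l\<in>V. a j0 l * c' l)"
    define c where "c = (\<lambda>l. if l = n then - S0 / a j0 n else c' l)"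
    have sumc: "(\<Sum>l\<in>insert n V. a j l * c l) = a j n * (- S0 / a j0 n) + (\<Sum>l\<in>V. a j l * c' l)" for j
    proof -
      have "(\<Sum>l\<in>insert n V. a j l * c l) = a j n * c n + (\<Sum>l\<in>V. a j l * c l)"
        using insert(1,2) by simp
      also have "(\<Sum>l\<in>V. a j l * c l) = (\<Sum>l\<in>V. a j l * c' l)"
        by (rule sum.cong, insert insert(2), auto simp: c_def)
      finally show ?thesis by (simp add: c_def)
    qed
    have "\<forall>j\<in>E. (\<Sum>l\<in>insert n V. a j l * c l) = 0"
    proof
      fix j assume j: "j \<in> E"
      show "(\<Sum>l\<in>insert n V. a j l * c l) = 0"
      proof (cases "j = j0")
        case True then show ?thesis unfolding sumc S0_def using j0 by simp
      next
        case False
        hence "j \<in> E'" using j unfolding E'_def by auto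
        with c' have "(\<Sum>l\<in>V. b j l * c' l) = 0" by auto
        hence "(\<Sum>l\<in>V. a j l * c' l) - a j n / a j0 n * S0 = 0"
          unfolding b_def S0_def by (simp add: algebra_simps sum_subtractf sum_distrib_left)
        then show ?thesis unfolding sumc using j0 by (simp add: field_simps)
      qed
    qed
    moreover have "\<exists>l\<in>insert n V. c l \<noteq> 0" using c' insert(2) by (auto simp: c_def)
    ultimately show ?thesis by blast
  qed
qed

lemma core:
  fixes g h :: "nat \<Rightarrow> nat \<Rightarrow> real" and QA QB :: "(nat \<Rightarrow> real) \<Rightarrow> real"
    and ks :: "(nat \<Rightarrow> real) list"
  assumes fin: "finite S1" "finite S2"
  and H1: "\<And>c. (\<exists>i\<in>S1. c i \<noteq> 0) \<Longrightarrow> QB (\<lambda>l. \<Sum>i\<in>S1. c i * g i l) < 0"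
  and H2: "\<And>e. QA (\<lambda>l. \<Sum>i\<in>S2. e i * h i l) \<ge> 0"
  and H2': "\<And>e. (\<forall>l<m. (\<Sum>i\<in>S2. e i * h i l) = 0) \<Longrightarrow> (\<forall>i\<in>S2. e i = 0)"
  and H3: "\<And>y. (\<forall>\<kappa>\<in>set ks. (\<Sum>l<m. \<kappa> l * y l) = 0) \<Longrightarrow> QA y \<le> QB y"
  and Hloc: "\<And>y z. (\<forall>l<m. y l = z l) \<Longrightarrow> QA y = QA z"
  shows "card S1 + card S2 \<le> m + length ks"
proof (rule ccontr)
  assume "\<not> ?thesis"
  hence lt: "m + length ks < card S1 + card S2" by simp
  define V where "V = S1 <+> S2"
  define E :: "(nat + nat) set" where "E = (Inl ` {..<m}) \<union> (Inr ` {..<length ks})"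
  have cV: "card V = card S1 + card S2" unfolding V_def using fin by (simp add: card_Plus)
  have cE: "card E = m + length ks" unfolding E_def
    by (subst card_Un_disjoint, auto simp: card_image)
  define a where "a = (\<lambda>eq var. case eq of
       Inl l \<Rightarrow> (case var of Inl i \<Rightarrow> g i l | Inr i \<Rightarrow> - h i l)
     | Inr j \<Rightarrow> (case var of Inl i \<Rightarrow> (\<Sum>l<m. (ks ! j) l * g i l) | Inr i \<Rightarrow> 0))"
  have "finite V" "finite E" unfolding V_def E_def using fin by auto
  from homog_solution[OF this, of a] lt cV cE obtain c where
    c: "\<exists>v\<in>V. c v \<noteq> 0" "\<forall>j\<in>E. (\<Sum>v\<in>V. a j v * c v) = (0::real)" by auto
  define y where "y = (\<lambda>l. \<Sum>i\<in>S1. c (Inl i) * g i l)"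
  define z where "z = (\<lambda>l. \<Sum>i\<in>S2. c (Inr i) * h i l)"
  have yz: "\<forall>l<m. y l = z l"
  proof (intro allI impI)
    fix l assume l: "l < m"
    with c(2) have "(\<Sum>v\<in>V. a (Inl l) v * c v) = 0" unfolding E_def by auto
    then show "y l = z l" unfolding V_def using fin
      by (simp add: sum.Plus a_def y_def z_def o_def sum_negf mult.commute)
  qed
  have ky: "\<forall>\<kappa>\<in>set ks. (\<Sum>l<m. \<kappa> l * y l) = 0"
  proof
    fix \<kappa> assume "\<kappa> \<in> set ks"
    then obtain j where j: "j < length ks" "\<kappa> = ks ! j" by (auto simp: in_set_conv_nth)
    with c(2) have "(\<Sum>v\<in>V. a (Inr j) v * c v) = 0" unfolding E_def by auto
    hence "(\<Sum>i\<in>S1. (\<Sum>l<m. \<kappa> l * g i l) * c (Inl i)) = 0" unfolding V_def using fin j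
      by (simp add: sum.Plus a_def o_def)
    moreover have "(\<Sum>i\<in>S1. (\<Sum>l<m. \<kappa> l * g i l) * c (Inl i)) = (\<Sum>l<m. \<kappa> l * y l)"
      unfolding y_def by (simp add: sum_distrib_left sum_distrib_right sum.swap[of _ S1] mult.commute mult.left_commute)
    ultimately show "(\<Sum>l<m. \<kappa> l * y l) = 0" by simp
  qed
  have "\<exists>i\<in>S1. c (Inl i) \<noteq> 0"
  proof (rule ccontr)
    assume "\<not> ?thesis"
    hence "\<forall>l. y l = 0" unfolding y_def by auto
    with yz have "\<forall>l<m. z l = 0" by auto
    from H2'[of "\<lambda>i. c (Inr i)"] this have "\<forall>i\<in>S2. c (Inr i) = 0" unfolding z_def by auto
    with \<open>\<not> ?thesis\<close> c(1) show False unfolding V_def by auto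
  qed
  from H1[OF this] have "QB y < 0" unfolding y_def .
  moreover have "QA y = QA z" using Hloc yz by auto
  moreover have "QA z \<ge> 0" unfolding z_def by (rule H2)
  moreover have "QA y \<le> QB y" using H3 ky by auto
  ultimately show False by linarith
qed



definition qf :: "nat \<Rightarrow> real mat \<Rightarrow> (nat \<Rightarrow> real) \<Rightarrow> real" where
  "qf n A y = (\<Sum>i<n. \<Sum>j<n. y i * A $$ (i,j) * y j)"

definition nrm :: "nat \<Rightarrow> (nat \<Rightarrow> real) \<Rightarrow> real" where
  "nrm n y = (\<Sum>i<n. y i * y i)"

lemma coord_span:
  fixes n :: nat
  assumes orth: "\<forall>l<n. \<forall>l'<n. (\<Sum>i<n. q l i * q l' i) = (if l = l' then 1 else (0::real))"
  and S: "S \<subseteq> {..<n}" and l: "l < n"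
  shows "(\<Sum>i<n. q l i * (\<Sum>k\<in>S. c k * q k i)) = (if l \<in> S then c l else 0)"
proof -
  have "(\<Sum>i<n. q l i * (\<Sum>k\<in>S. c k * q k i)) = (\<Sum>i<n. \<Sum>k\<in>S. c k * (q l i * q k i))"
    by (simp add: sum_distrib_left mult.commute mult.left_commute)
  also have "\<dots> = (\<Sum>k\<in>S. \<Sum>i<n. c k * (q l i * q k i))" by (rule sum.swap)
  also have "\<dots> = (\<Sum>k\<in>S. c k * (\<Sum>i<n. q l i * q k i))" by (simp add: sum_distrib_left)
  also have "\<dots> = (\<Sum>k\<in>S. if k = l then c l else 0)"
    by (rule sum.cong, insert orth S l, auto)
  also have "\<dots> = (if l \<in> S then c l else 0)"
    using finite_subset[OF S finite_lessThan] by (simp add: sum.delta)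
  finally show ?thesis .
qed

lemma qf_spec:
  assumes rep: "\<forall>i<n. \<forall>j<n. A $$ (i,j) = (\<Sum>l<n. lam l * q l i * q l j)"
  shows "qf n A y = (\<Sum>l<n. lam l * (\<Sum>i<n. q l i * y i)^2)"
proof -
  have "qf n A y = (\<Sum>i<n. \<Sum>j<n. \<Sum>l<n. y i * (lam l * q l i * q l j) * y j)"
    unfolding qf_def by (intro sum.cong refl, insert rep, auto simp: sum_distrib_left sum_distrib_right)
  also have "\<dots> = (\<Sum>i<n. \<Sum>l<n. \<Sum>j<n. y i * (lam l * q l i * q l j) * y j)"
    by (rule sum.cong[OF refl], rule sum.swap)
  also have "\<dots> = (\<Sum>l<n. \<Sum>i<n. \<Sum>j<n. y i * (lam l * q l i * q l j) * y j)"
    by (rule sum.swap)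
  also have "\<dots> = (\<Sum>l<n. lam l * (\<Sum>i<n. q l i * y i)^2)"
    by (intro sum.cong refl) (simp add: power2_eq_square sum_distrib_left sum_distrib_right mult.commute mult.left_commute)
  finally show ?thesis .
qed

lemma quad_span:
  fixes n :: nat
  assumes orth: "\<forall>l<n. \<forall>l'<n. (\<Sum>i<n. q l i * q l' i) = (if l = l' then 1 else (0::real))"
  and rep: "\<forall>i<n. \<forall>j<n. A $$ (i,j) = (\<Sum>l<n. lam l * q l i * q l j)"
  and S: "S \<subseteq> {..<n}"
  shows "qf n A (\<lambda>i. \<Sum>k\<in>S. c k * q k i) = (\<Sum>l\<in>S. lam l * (c l)^2)"
    and "nrm n (\<lambda>i. \<Sum>k\<in>S. c k * q k i) = (\<Sum>l\<in>S. (c l)^2)"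
proof -
  have cs: "\<And>l. l < n \<Longrightarrow> (\<Sum>i<n. q l i * (\<Sum>k\<in>S. c k * q k i)) = (if l \<in> S then c l else 0)"
    using coord_span[OF orth S] by auto
  have "qf n A (\<lambda>i. \<Sum>k\<in>S. c k * q k i) = (\<Sum>l<n. lam l * (if l \<in> S then c l else 0)^2)"
    unfolding qf_spec[OF rep] by (rule sum.cong, auto simp: cs)
  also have "\<dots> = (\<Sum>l<n. if l \<in> S then lam l * (c l)^2 else 0)"
    by (rule sum.cong, auto)
  also have "\<dots> = (\<Sum>l\<in>S. lam l * (c l)^2)"
    using S by (simp add: sum.If_cases Int_absorb1)
  finally show "qf n A (\<lambda>i. \<Sum>k\<in>S. c k * q k i) = (\<Sum>l\<in>S. lam l * (c l)^2)" .
  have "nrm n (\<lambda>i. \<Sum>k\<in>S. c k * q k i) = (\<Sum>i<n. (\<Sum>k\<in>S. c k * q k i) * (\<Sum>k\<in>S. c k * q k i))"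
    unfolding nrm_def ..
  also have "\<dots> = (\<Sum>i<n. \<Sum>k\<in>S. c k * (q k i * (\<Sum>k\<in>S. c k * q k i)))"
    by (simp add: sum_distrib_right mult.assoc)
  also have "\<dots> = (\<Sum>k\<in>S. \<Sum>i<n. c k * (q k i * (\<Sum>k\<in>S. c k * q k i)))" by (rule sum.swap)
  also have "\<dots> = (\<Sum>k\<in>S. c k * (\<Sum>i<n. q k i * (\<Sum>k\<in>S. c k * q k i)))" by (simp add: sum_distrib_left)
  also have "\<dots> = (\<Sum>k\<in>S. (c k)^2)"
    by (rule sum.cong, insert cs S, auto simp: power2_eq_square)
  finally show "nrm n (\<lambda>i. \<Sum>k\<in>S. c k * q k i) = (\<Sum>l\<in>S. (c l)^2)" .
qed

lemma sum_neg_strict: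
  fixes f :: "nat \<Rightarrow> real"
  assumes "finite S" "\<And>i. i \<in> S \<Longrightarrow> f i \<le> 0" "i0 \<in> S" "f i0 < 0"
  shows "sum f S < 0"
proof -
  have "sum f S = f i0 + sum f (S - {i0})" using assms by (simp add: sum.remove)
  moreover have "sum f (S - {i0}) \<le> 0" using assms by (intro sum_nonpos) auto
  ultimately show ?thesis using assms by linarith
qed

lemma weyl:
  fixes A B :: "real mat"
  assumes A: "A \<in> carrier_mat n n" and symA: "transpose_mat A = A"
  and B: "B \<in> carrier_mat n n" and symB: "transpose_mat B = B"
  and H: "\<And>y. (\<forall>\<kappa>\<in>set ks. (\<Sum>l<n. \<kappa> l * y l) = 0) \<Longrightarrow> qf n A y \<le> qf n B y"
  shows "eig_count B {..<x} \<le> eig_count A {..<x} + length ks"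
    and "eig_count B {..x} \<le> eig_count A {..x} + length ks"
proof -
  from spectral[OF A symA] obtain lamA qA where
    oA: "\<forall>l<n. \<forall>l'<n. (\<Sum>i<n. qA l i * qA l' i) = (if l = l' then 1 else 0)"
    and rA: "\<forall>i<n. \<forall>j<n. A $$ (i,j) = (\<Sum>l<n. lamA l * qA l i * qA l j)"
    and cA: "char_poly A = (\<Prod>l<n. [:- lamA l, 1:])" by blast
  from spectral[OF B symB] obtain lamB qB where
    oB: "\<forall>l<n. \<forall>l'<n. (\<Sum>i<n. qB l i * qB l' i) = (if l = l' then 1 else 0)"
    and rB: "\<forall>i<n. \<forall>j<n. B $$ (i,j) = (\<Sum>l<n. lamB l * qB l i * qB l j)"
    and cB: "char_poly B = (\<Prod>l<n. [:- lamB l, 1:])" by blast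
  have loc: "\<And>M y z. (\<forall>l<n. y l = z l) \<Longrightarrow> qf n M y = qf n M z \<and> nrm n y = nrm n z"
    unfolding qf_def nrm_def by auto
  have inj: "\<And>qq e S. \<forall>l<n. \<forall>l'<n. (\<Sum>i<n. qq l i * qq l' i) = (if l = l' then 1 else (0::real)) \<Longrightarrow>
     S \<subseteq> {..<n} \<Longrightarrow> (\<forall>l<n. (\<Sum>i\<in>S. e i * qq i l) = 0) \<Longrightarrow> (\<forall>i\<in>S. e i = 0)"
  proof (intro ballI)
    fix qq e S i
    assume o: "\<forall>l<n. \<forall>l'<n. (\<Sum>i<n. qq l i * qq l' i) = (if l = l' then 1 else (0::real))"
      and S: "S \<subseteq> {..<n}" and z: "\<forall>l<n. (\<Sum>i\<in>S. e i * qq i l) = 0" and i: "i \<in> S"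
    have "(\<Sum>j<n. qq i j * (\<Sum>k\<in>S. e k * qq k j)) = e i"
      using coord_span[OF o S, of i e] i S by auto
    moreover have "(\<Sum>j<n. qq i j * (\<Sum>k\<in>S. e k * qq k j)) = 0" using z by simp
    ultimately show "e i = 0" by simp
  qed
  show "eig_count B {..<x} \<le> eig_count A {..<x} + length ks"
  proof -
    define S1 where "S1 = {l. l < n \<and> lamB l < x}"
    define S2 where "S2 = {l. l < n \<and> \<not> lamA l < x}"
    have S1: "S1 \<subseteq> {..<n}" and S2: "S2 \<subseteq> {..<n}" unfolding S1_def S2_def by auto
    have "card S1 + card S2 \<le> n + length ks"
    proof (rule core[of S1 S2 "\<lambda>y. qf n B y - x * nrm n y" qB "\<lambda>y. qf n A y - x * nrm n y" qA n])
      show "finite S1" "finite S2" using S1 S2 finite_subset by auto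
      fix c :: "nat \<Rightarrow> real" assume "\<exists>i\<in>S1. c i \<noteq> 0"
      then obtain i0 where i0: "i0 \<in> S1" "c i0 \<noteq> 0" by auto
      have "qf n B (\<lambda>l. \<Sum>i\<in>S1. c i * qB i l) - x * nrm n (\<lambda>l. \<Sum>i\<in>S1. c i * qB i l)
          = (\<Sum>l\<in>S1. (lamB l - x) * (c l)^2)"
        unfolding quad_span[OF oB rB S1] by (simp add: sum_distrib_left algebra_simps sum_subtractf)
      also have "\<dots> < 0"
        by (rule sum_neg_strict[OF _ _ i0(1)], insert S1 finite_subset i0, auto simp: S1_def mult_nonpos_nonneg intro!: mult_neg_pos)
      finally show "qf n B (\<lambda>l. \<Sum>i\<in>S1. c i * qB i l) - x * nrm n (\<lambda>l. \<Sum>i\<in>S1. c i * qB i l) < 0" .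
    next
      fix e :: "nat \<Rightarrow> real"
      have "qf n A (\<lambda>l. \<Sum>i\<in>S2. e i * qA i l) - x * nrm n (\<lambda>l. \<Sum>i\<in>S2. e i * qA i l)
          = (\<Sum>l\<in>S2. (lamA l - x) * (e l)^2)"
        unfolding quad_span[OF oA rA S2] by (simp add: sum_distrib_left algebra_simps sum_subtractf)
      also have "\<dots> \<ge> 0" by (rule sum_nonneg, auto simp: S2_def)
      finally show "qf n A (\<lambda>l. \<Sum>i\<in>S2. e i * qA i l) - x * nrm n (\<lambda>l. \<Sum>i\<in>S2. e i * qA i l) \<ge> 0" .
    next
      fix e :: "nat \<Rightarrow> real" show "(\<forall>l<n. (\<Sum>i\<in>S2. e i * qA i l) = 0) \<Longrightarrow> (\<forall>i\<in>S2. e i = 0)"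
        using inj[OF oA S2] by blast
    next
      fix y assume "\<forall>\<kappa>\<in>set ks. (\<Sum>l<n. \<kappa> l * y l) = 0"
      with H show "qf n A y - x * nrm n y \<le> qf n B y - x * nrm n y" by auto
    next
      fix y z :: "nat \<Rightarrow> real" assume yz: "\<forall>l<n. y l = z l"
      from loc[OF yz] show "qf n A y - x * nrm n y = qf n A z - x * nrm n z" by simp
    qed
    moreover have "card S1 = eig_count B {..<x}" unfolding eig_count_spec[OF B cB] S1_def by simp
    moreover have "card S2 = n - eig_count A {..<x}"
    proof -
      have "S2 = {..<n} - {l. l < n \<and> lamA l \<in> {..<x}}" unfolding S2_def by auto
      then show ?thesis unfolding eig_count_spec[OF A cA] by (simp, subst card_Diff_subset, auto)
    qed
    moreover have "eig_count A {..<x} \<le> n" unfolding eig_count_spec[OF A cA]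
      by (rule order_trans[OF card_mono[of "{..<n}"]], auto)
    ultimately show ?thesis by linarith
  qed
  show "eig_count B {..x} \<le> eig_count A {..x} + length ks"
  proof -
    define S1 where "S1 = {l. l < n \<and> \<not> lamA l \<le> x}"
    define S2 where "S2 = {l. l < n \<and> lamB l \<le> x}"
    have S1: "S1 \<subseteq> {..<n}" and S2: "S2 \<subseteq> {..<n}" unfolding S1_def S2_def by auto
    have "card S1 + card S2 \<le> n + length ks"
    proof (rule core[of S1 S2 "\<lambda>y. x * nrm n y - qf n A y" qA "\<lambda>y. x * nrm n y - qf n B y" qB n])
      show "finite S1" "finite S2" using S1 S2 finite_subset by auto
      fix c :: "nat \<Rightarrow> real" assume "\<exists>i\<in>S1. c i \<noteq> 0"
      then obtain i0 where i0: "i0 \<in> S1" "c i0 \<noteq> 0" by auto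
      have "x * nrm n (\<lambda>l. \<Sum>i\<in>S1. c i * qA i l) - qf n A (\<lambda>l. \<Sum>i\<in>S1. c i * qA i l)
          = (\<Sum>l\<in>S1. (x - lamA l) * (c l)^2)"
        unfolding quad_span[OF oA rA S1] by (simp add: sum_distrib_left algebra_simps sum_subtractf)
      also have "\<dots> < 0"
        by (rule sum_neg_strict[OF _ _ i0(1)], insert S1 finite_subset i0, auto simp: S1_def mult_nonpos_nonneg intro!: mult_neg_pos)
      finally show "x * nrm n (\<lambda>l. \<Sum>i\<in>S1. c i * qA i l) - qf n A (\<lambda>l. \<Sum>i\<in>S1. c i * qA i l) < 0" .
    next
      fix e :: "nat \<Rightarrow> real"
      have "x * nrm n (\<lambda>l. \<Sum>i\<in>S2. e i * qB i l) - qf n B (\<lambda>l. \<Sum>i\<in>S2. e i * qB i l)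
          = (\<Sum>l\<in>S2. (x - lamB l) * (e l)^2)"
        unfolding quad_span[OF oB rB S2] by (simp add: sum_distrib_left algebra_simps sum_subtractf)
      also have "\<dots> \<ge> 0" by (rule sum_nonneg, auto simp: S2_def)
      finally show "x * nrm n (\<lambda>l. \<Sum>i\<in>S2. e i * qB i l) - qf n B (\<lambda>l. \<Sum>i\<in>S2. e i * qB i l) \<ge> 0" .
    next
      fix e :: "nat \<Rightarrow> real" show "(\<forall>l<n. (\<Sum>i\<in>S2. e i * qB i l) = 0) \<Longrightarrow> (\<forall>i\<in>S2. e i = 0)"
        using inj[OF oB S2] by blast
    next
      fix y assume "\<forall>\<kappa>\<in>set ks. (\<Sum>l<n. \<kappa> l * y l) = 0"
      with H show "x * nrm n y - qf n B y \<le> x * nrm n y - qf n A y" by auto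
    next
      fix y z :: "nat \<Rightarrow> real" assume yz: "\<forall>l<n. y l = z l"
      from loc[OF yz] show "x * nrm n y - qf n B y = x * nrm n z - qf n B z" by simp
    qed
    moreover have "card S2 = eig_count B {..x}" unfolding eig_count_spec[OF B cB] S2_def by simp
    moreover have "card S1 = n - eig_count A {..x}"
    proof -
      have "S1 = {..<n} - {l. l < n \<and> lamA l \<in> {..x}}" unfolding S1_def by auto
      then show ?thesis unfolding eig_count_spec[OF A cA] by (simp, subst card_Diff_subset, auto)
    qed
    moreover have "eig_count A {..x} \<le> n" unfolding eig_count_spec[OF A cA]
      by (rule order_trans[OF card_mono[of "{..<n}"]], auto)
    ultimately show ?thesis by linarith
  qed
qed



lemma dmono:
  fixes m a b :: nat and d :: "nat \<Rightarrow> real"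
  assumes "\<And>i. 1 \<le> i \<Longrightarrow> i < m \<Longrightarrow> d i < d (i + 1)" "1 \<le> a" "a < b" "b \<le> m"
  shows "d a < (d b :: real)"
  using assms(3,4)
proof (induct b)
  case (Suc b)
  show ?case
  proof (cases "a = b")
    case True then show ?thesis using assms(1)[of b] assms(2) Suc by auto
  next
    case False
    then have "d a < d b" using Suc by auto
    also have "d b < d (Suc b)" using assms(1)[of b] assms(2) Suc False by auto
    finally show ?thesis .
  qed
qed simp

lemma eig_count_union:
  fixes A :: "real mat"
  assumes A: "A \<in> carrier_mat n n" and disj: "S \<inter> T = {}"
  shows "eig_count A (S \<union> T) = eig_count A S + eig_count A T"
proof -
  have nz: "char_poly A \<noteq> 0" using degree_monic_char_poly[OF A] by auto
  have fin: "finite {x. eigenvalue A x}"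
    by (rule finite_subset[OF _ poly_roots_finite[OF nz]], auto simp: eigenvalue_root_char_poly[OF A])
  have "{x. eigenvalue A x \<and> x \<in> S \<union> T} = {x. eigenvalue A x \<and> x \<in> S} \<union> {x. eigenvalue A x \<and> x \<in> T}" by auto
  then show ?thesis unfolding eig_count_def
    by (simp, subst sum.union_disjoint, insert fin disj, auto intro: finite_subset)
qed

lemma eig_count_cong:
  assumes "\<And>x. eigenvalue A x \<Longrightarrow> x \<in> S \<longleftrightarrow> x \<in> T"
  shows "eig_count A S = eig_count A T"
proof -
  have "{x. eigenvalue A x \<and> x \<in> S} = {x. eigenvalue A x \<and> x \<in> T}" using assms by auto
  then show ?thesis unfolding eig_count_def by simp
qed

theorem lemma1:
  fixes m :: nat and d v1 v2 :: "nat \<Rightarrow> real" and \<beta>1 \<beta>2 :: real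
    and J1 J2 J3 :: "nat set"
  assumes "m \<ge> 2"
    and "\<And>i. 1 \<le> i \<Longrightarrow> i < m \<Longrightarrow> d i < d (i + 1)"
    and "\<beta>1 \<noteq> 0" and "\<beta>2 \<noteq> 0"
    and "J1 \<union> J2 \<union> J3 = {1..m}"
    and "J1 \<inter> J2 = {}" and "J1 \<inter> J3 = {}" and "J2 \<inter> J3 = {}"
    and "\<And>i. i \<in> J3 \<Longrightarrow> v1 i = 0"
    and "\<And>i. i \<in> J1 \<Longrightarrow> v2 i = 0"
    and "\<And>i. i \<in> {1..m} \<Longrightarrow> \<not> eigenvalue (rank2_mat m d \<beta>1 \<beta>2 v1 v2) (d i)"
  shows "(\<forall>j\<in>{1..m-1}. \<forall>k\<in>{1..m-j}.
            k - 1 \<le> eig_count (rank2_mat m d \<beta>1 \<beta>2 v1 v2) (I_int d j (j + k))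
          \<and> eig_count (rank2_mat m d \<beta>1 \<beta>2 v1 v2) (I_int d j (j + k)) \<le> k + 1)
       \<and> (\<forall>j\<in>{1..m-1}. eig_count (rank2_mat m d \<beta>1 \<beta>2 v1 v2) {d j<..<d (j + 1)} \<le> 2)"
proof -
  note mono = assms(2)
  note noev = assms(11)
  define M where "M = rank2_mat m d \<beta>1 \<beta>2 v1 v2"
  define D where "D = mat m m (\<lambda>(i,j). if i = j then d (i+1) else (0::real))"
  have M: "M \<in> carrier_mat m m" and D: "D \<in> carrier_mat m m" unfolding M_def rank2_mat_def D_def by auto
  have symM: "transpose_mat M = M" unfolding M_def rank2_mat_def by (rule eq_matI, auto)
  have symD: "transpose_mat D = D" unfolding D_def by (rule eq_matI, auto)
  define k1 where "k1 = (\<lambda>l. v1 (l+1))"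
  define k2 where "k2 = (\<lambda>l. v2 (l+1))"
  have qfM: "qf m M y = qf m D y + \<beta>1 * (\<Sum>l<m. k1 l * y l)^2 + \<beta>2 * (\<Sum>l<m. k2 l * y l)^2" for y
  proof -
    have sq: "(\<Sum>l<m. kk l * y l)^2 = (\<Sum>i<m. \<Sum>j<m. y i * (kk i * kk j) * y j)" for kk :: "nat \<Rightarrow> real"
      by (simp add: power2_eq_square sum_distrib_left sum_distrib_right mult.commute mult.left_commute)
    show ?thesis unfolding qf_def sq sum_distrib_left[of \<beta>1] sum_distrib_left[of \<beta>2] sum.distrib[symmetric]
      unfolding M_def rank2_mat_def D_def k1_def k2_def
      by (intro sum.cong refl, simp add: algebra_simps)
  qed
  have cpD: "char_poly D = (\<Prod>l<m. [:- d (l+1), 1:])"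
  proof -
    have "char_poly D = (\<Prod> a \<leftarrow> diag_mat D. [:- a, 1:])"
      by (rule char_poly_upper_triangular[OF D], auto simp: upper_triangular_def D_def)
    also have "diag_mat D = map (\<lambda>l. d (l+1)) [0..<m]" unfolding diag_mat_def D_def by auto
    finally show ?thesis using prod_list_upt[of "\<lambda>l. [:- d (l+1), 1:]" m] by (simp add: o_def)
  qed
  define ksN where "ksN = (if \<beta>1 < 0 then [k1] else []) @ (if \<beta>2 < 0 then [k2] else [])"
  define ksP where "ksP = (if \<beta>1 > 0 then [k1] else []) @ (if \<beta>2 > 0 then [k2] else [])"
  define p where "p = length ksP"
  define q where "q = length ksN"
  have pq: "p + q = 2" unfolding p_def q_def ksP_def ksN_def using assms(3,4) by auto
  have W1: "eig_count M {..<x} \<le> eig_count D {..<x} + q" "eig_count M {..x} \<le> eig_count D {..x} + q" for x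
  proof -
    have H: "qf m D y \<le> qf m M y" if y: "\<forall>\<kappa>\<in>set ksN. (\<Sum>l<m. \<kappa> l * y l) = 0" for y
    proof -
      have "\<beta>1 * (\<Sum>l<m. k1 l * y l)^2 \<ge> 0" using y assms(3) unfolding ksN_def
        by (cases "\<beta>1 < 0", auto)
      moreover have "\<beta>2 * (\<Sum>l<m. k2 l * y l)^2 \<ge> 0" using y assms(4) unfolding ksN_def
        by (cases "\<beta>2 < 0", auto)
      ultimately show ?thesis unfolding qfM by linarith
    qed
    from weyl[OF D symD M symM H] show "eig_count M {..<x} \<le> eig_count D {..<x} + q"
      "eig_count M {..x} \<le> eig_count D {..x} + q" unfolding q_def by auto
  qed
  have W2: "eig_count D {..<x} \<le> eig_count M {..<x} + p" "eig_count D {..x} \<le> eig_count M {..x} + p" for x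
  proof -
    have H: "qf m M y \<le> qf m D y" if y: "\<forall>\<kappa>\<in>set ksP. (\<Sum>l<m. \<kappa> l * y l) = 0" for y
    proof -
      have "\<beta>1 * (\<Sum>l<m. k1 l * y l)^2 \<le> 0" using y assms(3) unfolding ksP_def
        by (cases "\<beta>1 > 0", auto simp: mult_nonpos_nonneg)
      moreover have "\<beta>2 * (\<Sum>l<m. k2 l * y l)^2 \<le> 0" using y assms(4) unfolding ksP_def
        by (cases "\<beta>2 > 0", auto simp: mult_nonpos_nonneg)
      ultimately show ?thesis unfolding qfM by linarith
    qed
    from weyl[OF M symM D symD H] show "eig_count D {..<x} \<le> eig_count M {..<x} + p"
      "eig_count D {..x} \<le> eig_count M {..x} + p" unfolding p_def by auto
  qed
  have dm: "\<And>a b. 1 \<le> a \<Longrightarrow> a < b \<Longrightarrow> b \<le> m \<Longrightarrow> d a < d b" using dmono[of m d, OF mono] by blast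
  have dle: "\<And>a b. 1 \<le> a \<Longrightarrow> a \<le> b \<Longrightarrow> b \<le> m \<Longrightarrow> d a \<le> d b"
    using dm by (metis le_less order.refl)
  have cD1: "eig_count D {..<d j} = j - 1" if j: "1 \<le> j" "j \<le> m" for j
  proof -
    have "{l. l < m \<and> d (l+1) \<in> {..<d j}} = {..<j-1}"
    proof -
      have "l < j - 1" if l: "l < m" "d (l+1) < d j" for l
      proof (rule ccontr)
        assume "\<not> l < j - 1"
        hence "j \<le> l + 1" by auto
        hence "d j \<le> d (l+1)" using dle[of j "l+1"] j l by auto
        with l show False by auto
      qed
      moreover have "l < m \<and> d (l+1) < d j" if "l < j - 1" for l using dm[of "l+1" j] j that by auto
      ultimately show ?thesis by auto
    qed
    then show ?thesis unfolding eig_count_spec[OF D cpD] by simp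
  qed
  have cD2: "eig_count D {..d j} = j" if j: "1 \<le> j" "j \<le> m" for j
  proof -
    have "{l. l < m \<and> d (l+1) \<in> {..d j}} = {..<j}"
    proof -
      have "l < j" if l: "l < m" "d (l+1) \<le> d j" for l
      proof (rule ccontr)
        assume "\<not> l < j"
        hence "j < l + 1" by auto
        hence "d j < d (l+1)" using dm[of j "l+1"] j l by auto
        with l show False by auto
      qed
      moreover have "l < m \<and> d (l+1) \<le> d j" if "l < j" for l using dle[of "l+1" j] j that by auto
      ultimately show ?thesis by auto
    qed
    then show ?thesis unfolding eig_count_spec[OF D cpD] by simp
  qed
  have ab: "eig_count M {..d j} = eig_count M {..<d j}" if j: "1 \<le> j" "j \<le> m" for j
    by (rule eig_count_cong, insert noev[of j] j, auto simp: M_def less_le)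
  have bounds: "j \<le> eig_count M {..<d j} + p \<and> eig_count M {..<d j} + 1 \<le> j + q"
    if j: "1 \<le> j" "j \<le> m" for j
    using W1(1)[of "d j"] W2(2)[of "d j"] cD1[OF j] cD2[OF j] ab[OF j] j by auto
  have main: "k - 1 \<le> eig_count M (I_int d j (j + k)) \<and> eig_count M (I_int d j (j + k)) \<le> k + 1"
    if j: "j \<in> {1..m-1}" and k: "k \<in> {1..m-j}" for j k
  proof -
    have j1: "1 \<le> j" "j \<le> m" and jk: "1 \<le> j + k" "j + k \<le> m" "j < j + k" using j k by auto
    have Ieq: "eig_count M (I_int d j (j + k)) = eig_count M {d j<..<d (j+k)}"
    proof (rule eig_count_cong)
      fix x assume ev: "eigenvalue M x"
      show "x \<in> I_int d j (j + k) \<longleftrightarrow> x \<in> {d j<..<d (j+k)}"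
      proof
        assume "x \<in> I_int d j (j + k)"
        then obtain i where i: "j \<le> i" "i < j + k" "d i < x" "x < d (Suc i)" unfolding I_int_def by auto
        have "d j \<le> d i" using dle[of j i] i j1 jk by auto
        moreover have "d (Suc i) \<le> d (j + k)" using dle[of "Suc i" "j+k"] i j1 jk by auto
        ultimately show "x \<in> {d j<..<d (j+k)}" using i by auto
      next
        assume x: "x \<in> {d j<..<d (j+k)}"
        define F where "F = {i. j \<le> i \<and> i < j + k \<and> d i < x}"
        have "j \<in> F" unfolding F_def using x jk by auto
        have F1: "finite F" unfolding F_def by auto
        have F: "finite F" "F \<noteq> {}" using F1 \<open>j \<in> F\<close> by auto
        define i where "i = Max F"
        have iF: "i \<in> F" unfolding i_def using F by (rule Max_in)
        hence i: "j \<le> i" "i < j + k" "d i < x" unfolding F_def by auto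
        have "x < d (Suc i)"
        proof (cases "Suc i < j + k")
          case True
          have "Suc i \<notin> F"
          proof
            assume "Suc i \<in> F"
            from Max_ge[OF F(1) this] have "Suc i \<le> i" unfolding i_def .
            then show False by simp
          qed
          hence "x \<le> d (Suc i)" using True i unfolding F_def by auto
          moreover have "x \<noteq> d (Suc i)" using noev[of "Suc i"] ev True jk by (auto simp: M_def)
          ultimately show ?thesis by auto
        next
          case False
          hence "Suc i = j + k" using i by auto
          then show ?thesis using x by auto
        qed
        then show "x \<in> I_int d j (j + k)" unfolding I_int_def using i by auto
      qed
    qed
    have dj: "d j < d (j + k)" using dm[of j "j+k"] j1 jk by auto
    have disj: "{..d j} \<inter> {d j<..<d (j+k)} = {}" by auto
    have split: "eig_count M {..<d (j+k)} = eig_count M {..d j} + eig_count M {d j<..<d (j+k)}"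
      using eig_count_union[OF M disj] unfolding ivl_disj_un_one(1)[OF dj] .
    have b1: "j \<le> eig_count M {..<d j} + p" "eig_count M {..<d j} + 1 \<le> j + q" using bounds[OF j1] by simp_all
    have jk1: "1 \<le> j + k" "j + k \<le> m" using jk by simp_all
    have b2: "j + k \<le> eig_count M {..<d (j+k)} + p" "eig_count M {..<d (j+k)} + 1 \<le> j + k + q"
      using bounds[OF jk1] by simp_all
    have s2: "eig_count M {..<d (j+k)} = eig_count M {..<d j} + eig_count M {d j<..<d (j+k)}"
      using split ab[OF j1] by linarith
    show ?thesis unfolding Ieq using b1 b2 s2 pq by linarith
  qed
  show ?thesis
  proof (intro conjI ballI)
    fix j k assume "j \<in> {1..m-1}" "k \<in> {1..m-j}"
    from main[OF this] show "k - 1 \<le> eig_count (rank2_mat m d \<beta>1 \<beta>2 v1 v2) (I_int d j (j + k))"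
      "eig_count (rank2_mat m d \<beta>1 \<beta>2 v1 v2) (I_int d j (j + k)) \<le> k + 1" unfolding M_def by auto
  next
    fix j assume j: "j \<in> {1..m-1}"
    hence "1 \<in> {1..m-j}" by auto
    from main[OF j this] have "eig_count M (I_int d j (j + 1)) \<le> 2" by simp
    moreover have "I_int d j (j + 1) = {d j<..<d (j + 1)}" unfolding I_int_def by simp
    ultimately show "eig_count (rank2_mat m d \<beta>1 \<beta>2 v1 v2) {d j<..<d (j + 1)} \<le> 2"
      unfolding M_def by simp
  qed
qed


end
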